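(* Decompose the relative BRST operator as $\hat Q=\eta_0\,\mathcal X+\hat d$, where $\mathcal X=\beta_0+\sum_{n\neq0} n\,c_n\zeta_{-n}$ and $\hat d$ contains no $\eta_0$ (nor $\zeta_0$). Let $\mathcal P=\gamma_0$, so $[\mathcal X,\mathcal P]=1$. Define the tilded oscillators $\tilde b_n=b_n+n\zeta_n\gamma_0$ and $\tilde\eta_n=\eta_n+n c_n\gamma_0$ ($n\neq0$). Then the oscillators $\tilde b_n, c_n,\zeta_n,\tilde\eta_n,\beta_n,\gamma_n$ ($n\ne0$) satisfy the same (anti)commutation relations as the untilded ones and all commute with $\mathcal X$ and $\mathcal P$, and $\hat d$ commutes with both $\mathcal X$ and $\mathcal P$; i.e. when written in terms of the tilded oscillators (together with $x_n,\varphi_n$, $n\ne 0$, and the momenta), $\hat d$ is independent of $\mathcal X$ and $\mathcal P$.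
   Context: Same Fock space and BRST operator as follows. Fields/modes: $x_n$, $\varphi_n$ with $[x_m,x_n]=[\varphi_m,\varphi_n]=m\delta_{m+n,0}$; fermionic $b_n,c_n$ with $\{b_m,c_n\}=\delta_{m+n,0}$; fermionic $\zeta_n,\eta_n$ with $\{\zeta_m,\eta_n\}=\delta_{m+n,0}$; bosonic $\beta_n,\gamma_n$ with $[\gamma_m,\beta_n]=\delta_{m+n,0}$. $Q_B=\sum_m :c_{-m}(L^{matt}_m+L^{grav}_m+\tfrac12L^{bc}_m+L^{\zeta\eta}_m)+\eta_{-m}\beta_m:$ with $L^{matt}_n=\tfrac12\sum_m:x_mx_{n-m}:$, $L^{grav}_n=\sum_m:(-m\beta_m\gamma_{n-m}+\tfrac12\varphi_m\varphi_{n-m}):+\sqrt2 i(n+1)\varphi_n$, $L^{bc}_n=\sum_m(2n-m):b_mc_{n-m}:$, $L^{\zeta\eta}_n=-\sum_m m:\zeta_m\eta_{n-m}:$. One writes $Q_B=c_0L_0-b_0\sum_{n\ne0}n c_{-n}c_n+\hat Q$ with $\hat Q$ free of $b_0,c_0$. Explicitly $\hat d=\sum_{n\ne0}:c_{-n}(L^{matt}_n+L^{grav}_n+L'^{\zeta\eta}_n):+\sum_{n\ne0}\eta_{-n}\beta_n-\tfrac12\sum_{m,n\ne0,\,m+n\ne0}(m-n):c_{-m}c_{-n}b_{n+m}:$, where $L'^{\zeta\eta}_n$ is $L^{\zeta\eta}_n$ with the term containing $\eta_0$ removed. *)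

theory Defs
  imports Complex_Main "HOL-Library.Groups_Big_Fun"
begin

datatype mode = MX | MPhi | MB | MC | MZeta | MEta | MBeta | MGamma

definition fermionic :: "mode \<Rightarrow> bool" where
  "fermionic k \<longleftrightarrow> k \<in> {MB, MC, MZeta, MEta}"

definition kd :: "int \<Rightarrow> int \<Rightarrow> complex" where
  "kd m n = (if m + n = 0 then 1 else 0)"

text \<open>The value of the graded bracket [a_k(m), a_l(n)} (a multiple of the identity):
  [x_m,x_n] = [phi_m,phi_n] = m delta, {b_m,c_n} = {zeta_m,eta_n} = delta,
  [gamma_m,beta_n] = delta, and the symmetric partners; all others vanish.\<close>
fun brk :: "mode \<Rightarrow> int \<Rightarrow> mode \<Rightarrow> int \<Rightarrow> complex" where
  "brk MX m MX n = of_int m * kd m n"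
| "brk MPhi m MPhi n = of_int m * kd m n"
| "brk MB m MC n = kd m n"
| "brk MC m MB n = kd m n"
| "brk MZeta m MEta n = kd m n"
| "brk MEta m MZeta n = kd m n"
| "brk MGamma m MBeta n = kd m n"
| "brk MBeta m MGamma n = - kd m n"
| "brk _ _ _ _ = 0"

definition comm :: "('v::ab_group_add \<Rightarrow> 'v) \<Rightarrow> ('v \<Rightarrow> 'v) \<Rightarrow> 'v \<Rightarrow> 'v" where
  "comm A B = (\<lambda>v. A (B v) - B (A v))"

definition acomm :: "('v::ab_group_add \<Rightarrow> 'v) \<Rightarrow> ('v \<Rightarrow> 'v) \<Rightarrow> 'v \<Rightarrow> 'v" where
  "acomm A B = (\<lambda>v. A (B v) + B (A v))"

definition gbr :: "mode \<Rightarrow> mode \<Rightarrow> ('v::ab_group_add \<Rightarrow> 'v) \<Rightarrow> ('v \<Rightarrow> 'v) \<Rightarrow> 'v \<Rightarrow> 'v" where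
  "gbr k l A B = (if fermionic k \<and> fermionic l then acomm A B else comm A B)"

text \<open>A Fock-type representation of the oscillator algebra on a complex vector space
  (scalar multiplication sc): all modes are linear operators, satisfy the graded
  canonical (anti)commutation relations (different fermion systems anticommute,
  bosons commute with everything else), and every state is annihilated by all
  sufficiently high positive modes (so the normal-ordered infinite sums below are finite
  on every state).\<close>
definition osc_rep :: "(complex \<Rightarrow> 'v::ab_group_add \<Rightarrow> 'v) \<Rightarrow> (mode \<Rightarrow> int \<Rightarrow> 'v \<Rightarrow> 'v) \<Rightarrow> bool" where
  "osc_rep sc a \<longleftrightarrow>
     vector_space sc \<and>
     (\<forall>k n. Vector_Spaces.linear sc sc (a k n)) \<and>
     (\<forall>k l m n. gbr k l (a k m) (a l n) = (\<lambda>v. sc (brk k m l n) v)) \<and>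
     (\<forall>v. \<exists>N. \<forall>k n. n > N \<longrightarrow> a k n v = 0)"

definition tld :: "(complex \<Rightarrow> 'v::ab_group_add \<Rightarrow> 'v) \<Rightarrow> (mode \<Rightarrow> int \<Rightarrow> 'v \<Rightarrow> 'v) \<Rightarrow> mode \<Rightarrow> int \<Rightarrow> 'v \<Rightarrow> 'v" where
  "tld sc a k n =
     (if k = MB then (\<lambda>v. a MB n v + sc (of_int n) (a MZeta n (a MGamma 0 v)))
      else if k = MEta then (\<lambda>v. a MEta n v + sc (of_int n) (a MC n (a MGamma 0 v)))
      else a k n)"

definition opX :: "(complex \<Rightarrow> 'v::ab_group_add \<Rightarrow> 'v) \<Rightarrow> (mode \<Rightarrow> int \<Rightarrow> 'v \<Rightarrow> 'v) \<Rightarrow> 'v \<Rightarrow> 'v" where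
  "opX sc a v = a MBeta 0 v +
     Sum_any (\<lambda>n::int. if n = 0 then 0 else sc (of_int n) (a MC n (a MZeta (-n) v)))"

definition opP :: "(mode \<Rightarrow> int \<Rightarrow> 'v \<Rightarrow> 'v) \<Rightarrow> 'v \<Rightarrow> 'v" where
  "opP a = a MGamma 0"

text \<open>For n /= 0 all factors in each
  normal-ordered monomial mutually (anti)commute, so each normal-ordered monomial equals
  the plain product written below.
  Pieces: sum_{n/=0} c_{-n} L^matt_n; sum_{n/=0} c_{-n} L^grav_n (quadratic part and
  the linear term sqrt2 i (n+1) phi_n); sum_{n/=0} c_{-n} L'^{zeta eta}_n (m = n term,
  containing eta_0, removed); sum_{n/=0} eta_{-n} beta_n; and the cubic ghost term.\<close>
definition dhat :: "(complex \<Rightarrow> 'v::ab_group_add \<Rightarrow> 'v) \<Rightarrow> (mode \<Rightarrow> int \<Rightarrow> 'v \<Rightarrow> 'v) \<Rightarrow> 'v \<Rightarrow> 'v" where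
  "dhat sc a v =
       Sum_any (\<lambda>(n::int, m::int). if n = 0 then 0 else
          sc (1/2) (a MC (-n) (a MX m (a MX (n - m) v))))
     + Sum_any (\<lambda>(n::int, m::int). if n = 0 then 0 else
          sc (- of_int m) (a MC (-n) (a MBeta m (a MGamma (n - m) v)))
          + sc (1/2) (a MC (-n) (a MPhi m (a MPhi (n - m) v))))
     + Sum_any (\<lambda>n::int. if n = 0 then 0 else
          sc (complex_of_real (sqrt 2) * \<i> * of_int (n + 1)) (a MC (-n) (a MPhi n v)))
     + Sum_any (\<lambda>(n::int, m::int). if n = 0 \<or> m = n then 0 else
          sc (- of_int m) (a MC (-n) (a MZeta m (a MEta (n - m) v))))
     + Sum_any (\<lambda>n::int. if n = 0 then 0 else a MEta (-n) (a MBeta n v))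
     + Sum_any (\<lambda>(m::int, n::int). if m = 0 \<or> n = 0 \<or> m + n = 0 then 0 else
          sc (- (1/2) * of_int (m - n)) (a MC (-m) (a MC (-n) (a MB (n + m) v))))"

end

theory Submission
  imports Defs
begin

fun rk :: "mode \<Rightarrow> nat" where
  "rk MB = 0" | "rk MC = 1" | "rk MZeta = 2" | "rk MEta = 3" | "rk MX = 4"
| "rk MPhi = 5" | "rk MBeta = 6" | "rk MGamma = 7"

lemma kd_alt: "kd m n = (if n = - m then 1 else 0)" by (auto simp: kd_def)

locale OR =
  fixes sc :: "complex \<Rightarrow> 'v::ab_group_add \<Rightarrow> 'v"
    and a :: "mode \<Rightarrow> int \<Rightarrow> 'v \<Rightarrow> 'v"
  assumes R: "osc_rep sc a"
begin

lemma VS: "vector_space sc" using R unfolding osc_rep_def by blast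
lemma M: "module sc" using VS by (simp add: module_iff_vector_space)

lemma sc_add_r[simp]: "sc c (x + y) = sc c x + sc c y"
  using VS unfolding vector_space_def module_def by blast
lemma sc_add_l: "sc (c + d) x = sc c x + sc d x"
  using VS unfolding vector_space_def module_def by blast
lemma sc_sc[simp]: "sc c (sc d x) = sc (c * d) x"
  using VS unfolding vector_space_def module_def by blast
lemma sc_one[simp]: "sc 1 x = x"
  using VS unfolding vector_space_def module_def by blast
lemma sc_0l[simp]: "sc 0 x = 0"
  by (rule module.scale_zero_left[OF M])
lemma sc_0r[simp]: "sc c 0 = 0"
  by (rule module.scale_zero_right[OF M])
lemma sc_minus_l[simp]: "sc (- c) x = - sc c x"
  by (rule module.scale_minus_left[OF M])
lemma sc_minus_r[simp]: "sc c (- x) = - sc c x"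
  by (rule module.scale_minus_right[OF M])
lemma sc_diff_r[simp]: "sc c (x - y) = sc c x - sc c y"
  by (rule module.scale_right_diff_distrib[OF M])
lemma sc_diff_l: "sc (c - d) x = sc c x - sc d x"
  by (rule module.scale_left_diff_distrib[OF M])
lemma sc_sum_r: "sc c (sum f A) = (\<Sum>x\<in>A. sc c (f x))"
  by (rule module.scale_sum_right[OF M])

lemma LIN: "Vector_Spaces.linear sc sc (a k n)" using R unfolding osc_rep_def by blast

lemma a_add[simp]: "a k n (x + y) = a k n x + a k n y"
  using LIN unfolding Vector_Spaces.linear_iff by blast
lemma a_sc[simp]: "a k n (sc c x) = sc c (a k n x)"
  using LIN unfolding Vector_Spaces.linear_iff by blast
interpretation ad: additive "a k n" by standard simp
lemma a_0[simp]: "a k n 0 = 0" by (rule ad.zero)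
lemma a_minus[simp]: "a k n (- x) = - a k n x" by (rule ad.minus)
lemma a_diff[simp]: "a k n (x - y) = a k n x - a k n y" by (rule ad.diff)
lemma a_sum: "a k n (sum f A) = (\<Sum>x\<in>A. a k n (f x))" by (rule ad.sum)

lemma REL: "gbr k l (a k m) (a l n) = (\<lambda>v. sc (brk k m l n) v)"
  using R unfolding osc_rep_def by blast

lemma rel: "a k m (a l n v) = (if fermionic k \<and> fermionic l then - a l n (a k m v) else a l n (a k m v)) + sc (brk k m l n) v"
proof -
  have "gbr k l (a k m) (a l n) v = sc (brk k m l n) v" using REL by metis
  then show ?thesis unfolding gbr_def acomm_def comm_def
    by (auto split: if_splits simp: algebra_simps)
qed

lemma swap: "rk l < rk k \<Longrightarrow> a k m (a l n v) = (if fermionic k \<and> fermionic l then - a l n (a k m v) else a l n (a k m v)) + sc (brk k m l n) v"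
  by (rule rel)

lemma sameB: "k = MGamma \<or> k = MBeta \<Longrightarrow> a k m (a k n v) = a k n (a k m v)"
  using rel[of k m k n v] by (auto simp: fermionic_def)

lemma sc_coll: "sc c x + sc d x = sc (c + d) x" "sc c x + (sc d x + y) = sc (c + d) x + y"
  by (simp_all add: sc_add_l add.assoc)

lemma same: "fermionic k \<Longrightarrow> a k m (a k n v) = - a k n (a k m v)"
  using rel[of k m k n v] by (cases k) (auto simp: fermionic_def)

end

lemma Sum_any_neg: "Sum_any (\<lambda>i. - f i) = - Sum_any (f :: 'i \<Rightarrow> 'b::ab_group_add)"
proof (cases "finite {i. f i \<noteq> 0}")
  case True
  then show ?thesis by (simp add: Sum_any.expand_set sum_negf)
next
  case False
  then show ?thesis by simp
qed

lemma Sum_any_diff: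
  assumes "finite {i. f i \<noteq> 0}" "finite {i. g i \<noteq> 0}"
  shows "Sum_any (\<lambda>i. f i - g i) = Sum_any f - Sum_any (g :: 'i \<Rightarrow> 'b::ab_group_add)"
proof -
  have "finite {i. - g i \<noteq> 0}" using assms(2) by simp
  then have "Sum_any (\<lambda>i. f i + - g i) = Sum_any f + Sum_any (\<lambda>i. - g i)"
    by (rule Sum_any.distrib[OF assms(1)])
  then show ?thesis by (simp add: Sum_any_neg)
qed

lemma Sum_any_additive:
  assumes add: "\<And>x y. B (x + y) = B x + B y" and fin: "finite {i. f i \<noteq> 0}"
  shows "B (Sum_any f) = Sum_any (\<lambda>i. B (f i :: 'b::ab_group_add) :: 'c::ab_group_add)"
proof -
  interpret additive B by standard (rule add)
  have "Sum_any f = sum f {i. f i \<noteq> 0}" by (simp add: Sum_any.expand_set)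
  then have "B (Sum_any f) = sum (\<lambda>i. B (f i)) {i. f i \<noteq> 0}" by (simp add: sum)
  also have "\<dots> = Sum_any (\<lambda>i. B (f i))"
    by (rule Sum_any.expand_superset[symmetric]) (use fin in \<open>auto simp: zero\<close>)
  finally show ?thesis .
qed

lemma comm_sum_left:
  assumes add: "\<And>x y. Y (x + y) = Y x + Y y" and fin: "\<And>w. finite {i. T i w \<noteq> 0}"
  shows "comm (\<lambda>v. Sum_any (\<lambda>i. T i v)) Y v = Sum_any (\<lambda>i. comm (T i) Y (v::'b::ab_group_add))"
proof -
  interpret additive Y by standard (rule add)
  have f2: "finite {i. Y (T i v) \<noteq> 0}"
    by (rule finite_subset[OF _ fin[of v]]) (auto simp: zero)
  show ?thesis unfolding comm_def
    by (simp add: Sum_any_additive[OF add fin] Sum_any_diff[OF fin f2])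
qed

lemma comm_sum_right:
  assumes add: "\<And>x y. A (x + y) = A x + A y" and fin: "\<And>w. finite {k. Y k w \<noteq> 0}"
  shows "comm A (\<lambda>v. Sum_any (\<lambda>k. Y k v)) v = Sum_any (\<lambda>k. comm A (Y k) (v::'b::ab_group_add))"
proof -
  interpret additive A by standard (rule add)
  have f2: "finite {i. A (Y i v) \<noteq> 0}"
    by (rule finite_subset[OF _ fin[of v]]) (auto simp: zero)
  show ?thesis unfolding comm_def
    by (simp add: Sum_any_additive[OF add fin] Sum_any_diff[OF f2 fin])
qed

lemma Sum_any_diag: "Sum_any (\<lambda>(n, m). if m = n then g n else 0) = Sum_any (g :: 'i \<Rightarrow> 'b::ab_group_add)"
proof -
  let ?h = "\<lambda>(n, m). if m = n then g n else 0"
  have S: "{p. ?h p \<noteq> 0} = (\<lambda>n. (n, n)) ` {n. g n \<noteq> 0}"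
  proof (rule set_eqI)
    fix p :: "'i \<times> 'i"
    show "p \<in> {p. ?h p \<noteq> 0} \<longleftrightarrow> p \<in> (\<lambda>n. (n, n)) ` {n. g n \<noteq> 0}"
    proof (cases p)
      case (Pair x y)
      have "(x, y) \<in> (\<lambda>n. (n, n)) ` {n. g n \<noteq> 0} \<longleftrightarrow> y = x \<and> g x \<noteq> 0"
        by blast
      then show ?thesis using Pair by simp
    qed
  qed
  have inj: "inj (\<lambda>n. (n, n))" by (auto intro: injI)
  show ?thesis
  proof (cases "finite {n. g n \<noteq> 0}")
    case True
    have "Sum_any ?h = sum ?h ((\<lambda>n. (n, n)) ` {n. g n \<noteq> 0})" by (simp only: Sum_any.expand_set S)
    also have "\<dots> = sum g {n. g n \<noteq> 0}"
      by (subst sum.reindex) (auto intro: inj_on_subset[OF inj])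
    finally show ?thesis by (simp only: Sum_any.expand_set[of g])
  next
    case False
    then have "\<not> finite {p. ?h p \<noteq> 0}" unfolding S
      by (simp add: finite_image_iff inj_on_def)
    then have "Sum_any ?h = 0" by (rule Sum_any.infinite)
    moreover have "Sum_any g = 0" using False by (rule Sum_any.infinite)
    ultimately show ?thesis by simp
  qed
qed

lemma box1: "finite {(n::int, m::int). - n \<le> N \<and> m \<le> N \<and> n - m \<le> N}"
  by (rule finite_subset[of _ "{-N..2*N} \<times> {-2*N..N}"]) auto

lemma box2: "finite {(m::int, n::int). - m \<le> N \<and> - n \<le> N \<and> n + m \<le> N}"
  by (rule finite_subset[of _ "{-N..2*N} \<times> {-N..2*N}"]) auto


context OR begin
lemma P1: "m \<noteq> 0 \<Longrightarrow> n \<noteq> 0 \<Longrightarrow> gbr k l (tld sc a k m) (tld sc a l n) = (\<lambda>v. sc (brk k m l n) v)"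
  apply (cases k; cases l)
  apply (simp_all only: tld_def mode.distinct if_True if_False REL)
  apply (simp_all add: gbr_def acomm_def comm_def fermionic_def fun_eq_iff swap kd_alt mult_ac sc_coll sameB[of MGamma 0 n] sameB[of MGamma 0 m]
     same[of MB n m] same[of MC n m] same[of MZeta n m] same[of MEta n m])
  done
end

context OR begin

definition kill :: "int \<Rightarrow> 'v \<Rightarrow> bool" where
  "kill N w \<longleftrightarrow> (\<forall>k n. n > N \<longrightarrow> a k n w = 0)"

lemma ann: "\<exists>N. kill N w"
  using R unfolding osc_rep_def kill_def by blast

lemma pass: "brk k p l q = 0 \<Longrightarrow> a k p w = 0 \<Longrightarrow> a k p (a l q w) = 0"
  using rel[of k p l q w] by (auto split: if_splits)

lemma k1: "kill N w \<Longrightarrow> a k p w \<noteq> 0 \<Longrightarrow> p \<le> N"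
  unfolding kill_def by (meson not_le)

lemma k2: "kill N w \<Longrightarrow> brk k p l q = 0 \<Longrightarrow> a k p (a l q w) \<noteq> 0 \<Longrightarrow> p \<le> N \<and> q \<le> N"
  by (metis a_0 k1 pass)

lemma k3: "kill N w \<Longrightarrow> brk k1 p1 k2 p2 = 0 \<Longrightarrow> brk k1 p1 k3 p3 = 0 \<Longrightarrow> brk k2 p2 k3 p3 = 0
   \<Longrightarrow> a k1 p1 (a k2 p2 (a k3 p3 w)) \<noteq> 0 \<Longrightarrow> p1 \<le> N \<and> p2 \<le> N \<and> p3 \<le> N"
proof -
  assume K: "kill N w" and b12: "brk k1 p1 k2 p2 = 0" and b13: "brk k1 p1 k3 p3 = 0"
    and b23: "brk k2 p2 k3 p3 = 0" and nz: "a k1 p1 (a k2 p2 (a k3 p3 w)) \<noteq> 0"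
  have "a k2 p2 (a k3 p3 w) \<noteq> 0" using nz by auto
  with k2[OF K b23] have "p2 \<le> N \<and> p3 \<le> N" by blast
  moreover have "p1 \<le> N"
  proof (rule ccontr)
    assume "\<not> p1 \<le> N"
    then have "a k1 p1 w = 0" using K unfolding kill_def by auto
    then have "a k1 p1 (a k3 p3 w) = 0" by (rule pass[OF b13])
    then have "a k1 p1 (a k2 p2 (a k3 p3 w)) = 0" by (rule pass[OF b12])
    with nz show False by blast
  qed
  ultimately show ?thesis by blast
qed

definition Yk :: "int \<Rightarrow> 'v \<Rightarrow> 'v" where
  "Yk k v = (if k = 0 then a MBeta 0 v else sc (of_int k) (a MC k (a MZeta (-k) v)))"

lemma Y_add[simp]: "Yk k (x + y) = Yk k x + Yk k y" by (simp add: Yk_def)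
lemma Y_sc[simp]: "Yk k (sc c x) = sc c (Yk k x)" by (simp add: Yk_def mult.commute)
lemma Y_0[simp]: "Yk k 0 = 0" by (simp add: Yk_def)
lemma Y_minus[simp]: "Yk k (- x) = - Yk k x" by (simp add: Yk_def)
lemma Y_diff[simp]: "Yk k (x - y) = Yk k x - Yk k y" by (simp add: Yk_def)

lemma a_if[simp]: "a k n (if P then x else 0) = (if P then a k n x else 0)" by simp
lemma sc_if[simp]: "sc c (if P then x else 0) = (if P then sc c x else 0)" by simp

lemma Y_fin: "finite {k. Yk k w \<noteq> 0}"
proof -
  obtain N where K: "kill N w" using ann by blast
  have "{k. Yk k w \<noteq> 0} \<subseteq> {-N..N}"
  proof
    fix k assume "k \<in> {k. Yk k w \<noteq> 0}"
    then have "Yk k w \<noteq> 0" by simp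
    then show "k \<in> {-N..N}"
    proof (cases "k = 0")
      case True then show ?thesis using K k1 \<open>Yk k w \<noteq> 0\<close> by (force simp: Yk_def)
    next
      case False
      then have "a MC k (a MZeta (-k) w) \<noteq> 0" using \<open>Yk k w \<noteq> 0\<close> by (auto simp: Yk_def)
      from k2[OF K _ this] show ?thesis by simp
    qed
  qed
  then show ?thesis by (rule finite_subset) simp
qed

lemma opX_Y: "opX sc a v = Sum_any (\<lambda>k. Yk k v)"
proof -
  have fin: "finite {k. (if k = 0 then 0 else sc (of_int k) (a MC k (a MZeta (-k) v))) \<noteq> 0}"
    by (rule finite_subset[OF _ Y_fin[of v]]) (auto simp: Yk_def)
  have f0: "finite {k::int. (if k = 0 then a MBeta 0 v else 0) \<noteq> 0}"
    by (rule finite_subset[of _ "{0}"]) auto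
  have "Sum_any (\<lambda>k. Yk k v) = Sum_any (\<lambda>k. (if k = 0 then a MBeta 0 v else 0) +
      (if k = 0 then 0 else sc (of_int k) (a MC k (a MZeta (-k) v))))"
    by (rule Sum_any.cong) (simp add: Yk_def)
  also have "\<dots> = a MBeta 0 v + Sum_any (\<lambda>k. if k = 0 then 0 else sc (of_int k) (a MC k (a MZeta (-k) v)))"
    by (subst Sum_any.distrib[OF f0 fin]) simp
  finally show ?thesis by (simp add: opX_def)
qed

lemma opX_add: "opX sc a (x + y) = opX sc a x + opX sc a y"
  unfolding opX_Y by (simp add: Sum_any.distrib[OF Y_fin Y_fin])

lemma cY_X[simp]: "a MX p (Yk k w) = Yk k (a MX p w)"
  by (simp add: Yk_def rel[of MX p MBeta 0] rel[of MX p MC k] rel[of MX p MZeta "-k"] fermionic_def)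
lemma cY_Phi[simp]: "a MPhi p (Yk k w) = Yk k (a MPhi p w)"
  by (simp add: Yk_def rel[of MPhi p MBeta 0] rel[of MPhi p MC k] rel[of MPhi p MZeta "-k"] fermionic_def)
lemma cY_C[simp]: "a MC p (Yk k w) = Yk k (a MC p w)"
  by (simp add: Yk_def rel[of MC p MBeta 0] rel[of MC p MC k] rel[of MC p MZeta "-k"] fermionic_def)
lemma cY_Z[simp]: "a MZeta p (Yk k w) = Yk k (a MZeta p w)"
  by (simp add: Yk_def rel[of MZeta p MBeta 0] rel[of MZeta p MC k] rel[of MZeta p MZeta "-k"] fermionic_def kd_def)
lemma cY_Be[simp]: "a MBeta p (Yk k w) = Yk k (a MBeta p w)"
  by (simp add: Yk_def rel[of MBeta p MBeta 0] rel[of MBeta p MC k] rel[of MBeta p MZeta "-k"] fermionic_def)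
lemma cY_G[simp]: "a MGamma p (Yk k w) = Yk k (a MGamma p w) + (if k = 0 \<and> p = 0 then w else 0)"
  by (simp add: Yk_def rel[of MGamma _ MBeta] rel[of MGamma _ MC] rel[of MGamma _ MZeta] fermionic_def kd_def)
lemma cY_E[simp]: "a MEta p (Yk k w) = Yk k (a MEta p w) + (if k = p \<and> k \<noteq> 0 then - sc (of_int k) (a MC k w) else 0)"
  by (simp add: Yk_def rel[of MEta _ MBeta] rel[of MEta _ MC] rel[of MEta _ MZeta] fermionic_def kd_def)
lemma cY_B[simp]: "a MB p (Yk k w) = Yk k (a MB p w) + (if k = -p \<and> k \<noteq> 0 then sc (of_int k) (a MZeta (-k) w) else 0)"
  by (simp add: Yk_def rel[of MB _ MBeta] rel[of MB _ MC] rel[of MB _ MZeta] fermionic_def kd_def)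

end

context OR begin

definition "T1f i v = (case i of (n::int, m::int) \<Rightarrow> if n = 0 then 0 else
          sc (1/2) (a MC (-n) (a MX m (a MX (n - m) v))))"
definition "T2f i v = (case i of (n::int, m::int) \<Rightarrow> if n = 0 then 0 else
          sc (- of_int m) (a MC (-n) (a MBeta m (a MGamma (n - m) v)))
          + sc (1/2) (a MC (-n) (a MPhi m (a MPhi (n - m) v))))"
definition "T3f n v = (if (n::int) = 0 then 0 else
          sc (complex_of_real (sqrt 2) * \<i> * of_int (n + 1)) (a MC (-n) (a MPhi n v)))"
definition "T4f i v = (case i of (n::int, m::int) \<Rightarrow> if n = 0 \<or> m = n then 0 else
          sc (- of_int m) (a MC (-n) (a MZeta m (a MEta (n - m) v))))"
definition "T5f n v = (if (n::int) = 0 then 0 else a MEta (-n) (a MBeta n v))"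
definition "T6f i v = (case i of (m::int, n::int) \<Rightarrow> if m = 0 \<or> n = 0 \<or> m + n = 0 then 0 else
          sc (- (1/2) * of_int (m - n)) (a MC (-m) (a MC (-n) (a MB (n + m) v))))"

lemma dhat_T: "dhat sc a v = Sum_any (\<lambda>i. T1f i v) + Sum_any (\<lambda>i. T2f i v) + Sum_any (\<lambda>i. T3f i v)
   + Sum_any (\<lambda>i. T4f i v) + Sum_any (\<lambda>i. T5f i v) + Sum_any (\<lambda>i. T6f i v)"
  unfolding dhat_def T1f_def T2f_def T3f_def T4f_def T5f_def T6f_def by simp

lemma T1_fin: "finite {i. T1f i w \<noteq> 0}"
proof -
  obtain N where K: "kill N w" using ann by blast
  { fix n m assume A: "T1f (n,m) w \<noteq> 0"
    then have "n \<noteq> 0" "a MC (-n) (a MX m (a MX (n-m) w)) \<noteq> 0" by (auto simp: T1f_def split: if_splits)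
    from k3[OF K _ _ _ this(2)] this(1) have "-n \<le> N \<and> m \<le> N \<and> n - m \<le> N" by (simp add: kd_def) }
  then have "{i. T1f i w \<noteq> 0} \<subseteq> {(n, m). - n \<le> N \<and> m \<le> N \<and> n - m \<le> N}" by auto
  then show ?thesis using box1 finite_subset by blast
qed

lemma T2_fin: "finite {i. T2f i w \<noteq> 0}"
proof -
  obtain N where K: "kill N w" using ann by blast
  { fix n m assume A: "T2f (n,m) w \<noteq> 0"
    then have n0: "n \<noteq> 0" by (auto simp: T2f_def)
    have "a MC (-n) (a MBeta m (a MGamma (n-m) w)) \<noteq> 0 \<or> a MC (-n) (a MPhi m (a MPhi (n-m) w)) \<noteq> 0"
      using A by (auto simp: T2f_def split: if_splits)
    then have "-n \<le> N \<and> m \<le> N \<and> n - m \<le> N"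
    proof
      assume "a MC (-n) (a MBeta m (a MGamma (n-m) w)) \<noteq> 0"
      from k3[OF K _ _ _ this] n0 show ?thesis by (simp add: kd_def)
    next
      assume "a MC (-n) (a MPhi m (a MPhi (n-m) w)) \<noteq> 0"
      from k3[OF K _ _ _ this] n0 show ?thesis by (simp add: kd_def)
    qed }
  then have "{i. T2f i w \<noteq> 0} \<subseteq> {(n, m). - n \<le> N \<and> m \<le> N \<and> n - m \<le> N}" by auto
  then show ?thesis using box1 finite_subset by blast
qed

lemma T4_fin: "finite {i. T4f i w \<noteq> 0}"
proof -
  obtain N where K: "kill N w" using ann by blast
  { fix n m assume A: "T4f (n,m) w \<noteq> 0"
    then have "n \<noteq> 0" "a MC (-n) (a MZeta m (a MEta (n-m) w)) \<noteq> 0" by (auto simp: T4f_def split: if_splits)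
    from k3[OF K _ _ _ this(2)] this(1) have "-n \<le> N \<and> m \<le> N \<and> n - m \<le> N" by (simp add: kd_def) }
  then have "{i. T4f i w \<noteq> 0} \<subseteq> {(n, m). - n \<le> N \<and> m \<le> N \<and> n - m \<le> N}" by auto
  then show ?thesis using box1 finite_subset by blast
qed

lemma T6_fin: "finite {i. T6f i w \<noteq> 0}"
proof -
  obtain N where K: "kill N w" using ann by blast
  { fix m n assume A: "T6f (m,n) w \<noteq> 0"
    then have "m \<noteq> 0" "n \<noteq> 0" "a MC (-m) (a MC (-n) (a MB (n+m) w)) \<noteq> 0" by (auto simp: T6f_def split: if_splits)
    from k3[OF K _ _ _ this(3)] this(1,2) have "-m \<le> N \<and> -n \<le> N \<and> n + m \<le> N" by (simp add: kd_def) }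
  then have "{i. T6f i w \<noteq> 0} \<subseteq> {(m, n). - m \<le> N \<and> - n \<le> N \<and> n + m \<le> N}" by auto
  then show ?thesis using box2 finite_subset by blast
qed

lemma T3_fin: "finite {i. T3f i w \<noteq> 0}"
proof -
  obtain N where K: "kill N w" using ann by blast
  { fix n assume A: "T3f n w \<noteq> 0"
    then have "a MC (-n) (a MPhi n w) \<noteq> 0" by (auto simp: T3f_def split: if_splits)
    from k2[OF K _ this] have "-n \<le> N \<and> n \<le> N" by simp }
  then have "{i. T3f i w \<noteq> 0} \<subseteq> {-N..N}" by force
  then show ?thesis using finite_subset by blast
qed

lemma T5_fin: "finite {i. T5f i w \<noteq> 0}"
proof -
  obtain N where K: "kill N w" using ann by blast
  { fix n assume A: "T5f n w \<noteq> 0"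
    then have "a MEta (-n) (a MBeta n w) \<noteq> 0" by (auto simp: T5f_def split: if_splits)
    from k2[OF K _ this] have "-n \<le> N \<and> n \<le> N" by simp }
  then have "{i. T5f i w \<noteq> 0} \<subseteq> {-N..N}" by force
  then show ?thesis using finite_subset by blast
qed

lemma cT1: "comm (T1f i) (Yk k) v = 0"
  by (cases i) (simp add: comm_def T1f_def)
lemma cT2: "comm (T2f (n, m)) (Yk k) v = (if k = 0 \<and> m = n \<and> n \<noteq> 0 then sc (- of_int n) (a MC (-n) (a MBeta n v)) else 0)"
  by (auto simp: comm_def T2f_def)
lemma cT3: "comm (T3f n) (Yk k) v = 0"
  by (simp add: comm_def T3f_def)
lemma cT4: "comm (T4f (n, m)) (Yk k) v = (if k = n - m \<and> n \<noteq> 0 \<and> m \<noteq> n then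
     sc (of_int m * of_int (n - m)) (a MC (-n) (a MZeta m (a MC (n - m) v))) else 0)"
  by (auto simp: comm_def T4f_def)
lemma cT5: "comm (T5f n) (Yk k) v = (if k = - n \<and> n \<noteq> 0 then sc (of_int n) (a MC (-n) (a MBeta n v)) else 0)"
  by (auto simp: comm_def T5f_def)
lemma cT6: "comm (T6f (m, n)) (Yk k) v = (if k = - (n + m) \<and> m \<noteq> 0 \<and> n \<noteq> 0 \<and> m + n \<noteq> 0 then
     sc (- (1/2) * of_int (m - n) * of_int (- (n + m))) (a MC (-m) (a MC (-n) (a MZeta (m + n) v))) else 0)"
  by (auto simp: comm_def T6f_def)

end

context OR begin

lemma commX:
  assumes add: "\<And>i x y. T i (x + y) = T i x + T i y" and fin: "\<And>w. finite {i. T i w \<noteq> 0}"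
  shows "comm (\<lambda>v. Sum_any (\<lambda>i. T i v)) (opX sc a) v = Sum_any (\<lambda>i. Sum_any (\<lambda>k. comm (T i) (Yk k) v))"
proof -
  have X: "opX sc a = (\<lambda>v. Sum_any (\<lambda>k. Yk k v))" by (rule ext) (rule opX_Y)
  have "comm (\<lambda>v. Sum_any (\<lambda>i. T i v)) (opX sc a) v = Sum_any (\<lambda>i. comm (T i) (opX sc a) v)"
    by (rule comm_sum_left[OF opX_add fin])
  also have "\<dots> = Sum_any (\<lambda>i. Sum_any (\<lambda>k. comm (T i) (Yk k) v))"
    unfolding X by (rule Sum_any.cong) (rule comm_sum_right[OF add Y_fin])
  finally show ?thesis .
qed

lemma delta2: "Sum_any (\<lambda>k. if k = c \<and> P then x else 0) = (if P then x else (0::'v))"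
  by (cases P) simp_all

lemma T1_add: "T1f i (x + y) = T1f i x + T1f i y" by (cases i) (simp add: T1f_def)
lemma T2_add: "T2f i (x + y) = T2f i x + T2f i y" by (cases i) (simp add: T2f_def algebra_simps)
lemma T3_add: "T3f i (x + y) = T3f i x + T3f i y" by (simp add: T3f_def)
lemma T4_add: "T4f i (x + y) = T4f i x + T4f i y" by (cases i) (simp add: T4f_def)
lemma T5_add: "T5f i (x + y) = T5f i x + T5f i y" by (simp add: T5f_def)
lemma T6_add: "T6f i (x + y) = T6f i x + T6f i y" by (cases i) (simp add: T6f_def)

lemma S1: "comm (\<lambda>v. Sum_any (\<lambda>i. T1f i v)) (opX sc a) v = 0"
  unfolding commX[OF T1_add T1_fin] cT1 by simp
lemma S3: "comm (\<lambda>v. Sum_any (\<lambda>i. T3f i v)) (opX sc a) v = 0"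
  unfolding commX[OF T3_add T3_fin] cT3 by simp

definition "g2 v n = (if (n::int) \<noteq> 0 then sc (- of_int n) (a MC (-n) (a MBeta n v)) else 0)"

lemma S2: "comm (\<lambda>v. Sum_any (\<lambda>i. T2f i v)) (opX sc a) v = Sum_any (g2 v)"
proof -
  have "comm (\<lambda>v. Sum_any (\<lambda>i. T2f i v)) (opX sc a) v = Sum_any (\<lambda>i. Sum_any (\<lambda>k. comm (T2f i) (Yk k) v))"
    by (rule commX[OF T2_add T2_fin])
  also have "\<dots> = Sum_any (\<lambda>(n, m). if m = n then g2 v n else 0)"
    by (rule Sum_any.cong) (auto simp: cT2 delta2 g2_def)
  also have "\<dots> = Sum_any (g2 v)" by (rule Sum_any_diag)
  finally show ?thesis .
qed

lemma S5: "comm (\<lambda>v. Sum_any (\<lambda>i. T5f i v)) (opX sc a) v = - Sum_any (g2 v)"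
proof -
  have "comm (\<lambda>v. Sum_any (\<lambda>i. T5f i v)) (opX sc a) v = Sum_any (\<lambda>i. Sum_any (\<lambda>k. comm (T5f i) (Yk k) v))"
    by (rule commX[OF T5_add T5_fin])
  also have "\<dots> = Sum_any (\<lambda>n. - g2 v n)"
    by (rule Sum_any.cong) (auto simp: cT5 delta2 g2_def)
  also have "\<dots> = - Sum_any (g2 v)" by (rule Sum_any_neg)
  finally show ?thesis .
qed

end

context OR begin

definition "Xc v A B = a MC (-A) (a MC (-B) (a MZeta (A + B) v))"
definition "F4 v p = (case p of (A::int, B::int) \<Rightarrow> if A \<noteq> 0 \<and> B \<noteq> 0 \<and> A + B \<noteq> 0 then
    sc (of_int (A + B) * of_int B) (Xc v A B) else 0)"
definition "F6 v p = (case p of (A::int, B::int) \<Rightarrow> if A \<noteq> 0 \<and> B \<noteq> 0 \<and> A + B \<noteq> 0 then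
    sc ((1/2) * of_int (A - B) * of_int (A + B)) (Xc v A B) else 0)"
definition "H v p = (case p of (A::int, B::int) \<Rightarrow> if A \<noteq> 0 \<and> B \<noteq> 0 \<and> A + B \<noteq> 0 then
    sc ((1/2) * of_int (A + B) * of_int (A + B)) (Xc v A B) else 0)"

lemma Xc_fin: "finite {p. (case p of (A, B) \<Rightarrow> if A \<noteq> 0 \<and> B \<noteq> 0 \<and> A + B \<noteq> 0 then sc (c A B) (Xc v A B) else 0) \<noteq> 0}"
proof -
  obtain N where K: "kill N v" using ann by blast
  { fix A B assume "(if A \<noteq> 0 \<and> B \<noteq> 0 \<and> A + B \<noteq> 0 then sc (c A B) (Xc v A B) else 0) \<noteq> 0"
    then have "a MC (-A) (a MC (-B) (a MZeta (A + B) v)) \<noteq> 0" by (auto simp: Xc_def split: if_splits)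
    from k3[OF K _ _ _ this] have "-A \<le> N \<and> -B \<le> N \<and> B + A \<le> N" by simp }
  then have "{p. (case p of (A, B) \<Rightarrow> if A \<noteq> 0 \<and> B \<noteq> 0 \<and> A + B \<noteq> 0 then sc (c A B) (Xc v A B) else 0) \<noteq> 0}
     \<subseteq> {(m, n). - m \<le> N \<and> - n \<le> N \<and> n + m \<le> N}" by auto
  then show ?thesis using box2 finite_subset by blast
qed

lemma F4_pt: "(if A \<noteq> 0 \<and> A + B \<noteq> A then sc (of_int (A + B) * of_int (A - (A + B)))
   (a MC (-A) (a MZeta (A + B) (a MC (A - (A + B)) v))) else 0) = F4 v (A, B)"
proof -
  have e: "A - (A + B) = - B" by simp
  have z: "a MZeta (A+B) (a MC (-B) v) = - a MC (-B) (a MZeta (A+B) v)"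
    using rel[of MZeta "A+B" MC "-B" v] by (simp add: fermionic_def)
  show ?thesis
  proof (cases "A + B = 0")
    case True
    then have "B = - A" by simp
    then show ?thesis by (simp add: F4_def)
  next
    case False
    then show ?thesis unfolding e F4_def Xc_def by (simp add: z)
  qed
qed

lemma S4: "comm (\<lambda>v. Sum_any (\<lambda>i. T4f i v)) (opX sc a) v = Sum_any (F4 v)"
proof -
  have "comm (\<lambda>v. Sum_any (\<lambda>i. T4f i v)) (opX sc a) v = Sum_any (\<lambda>i. Sum_any (\<lambda>k. comm (T4f i) (Yk k) v))"
    by (rule commX[OF T4_add T4_fin])
  also have "\<dots> = Sum_any (\<lambda>(n, m). if n \<noteq> 0 \<and> m \<noteq> n then
     sc (of_int m * of_int (n - m)) (a MC (-n) (a MZeta m (a MC (n - m) v))) else 0)"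
    by (rule Sum_any.cong) (auto simp: cT4 delta2)
  also have "\<dots> = Sum_any (F4 v)"
  proof (rule Sum_any.reindex_cong[of "\<lambda>(A, B). (A, A + B)"])
    show "bij (\<lambda>(A::int, B::int). (A, A + B))"
      by (rule bij_betw_byWitness[of _ "\<lambda>(n, m). (n, m - n)"]) auto
    show "(\<lambda>(n, m). if n \<noteq> 0 \<and> m \<noteq> n then
     sc (of_int m * of_int (n - m)) (a MC (-n) (a MZeta m (a MC (n - m) v))) else 0) \<circ> (\<lambda>(A, B). (A, A + B)) = F4 v"
    proof (rule ext)
      fix p :: "int \<times> int"
      obtain A B where p: "p = (A, B)" by (cases p)
      show "((\<lambda>(n, m). if n \<noteq> 0 \<and> m \<noteq> n then
     sc (of_int m * of_int (n - m)) (a MC (-n) (a MZeta m (a MC (n - m) v))) else 0) \<circ> (\<lambda>(A, B). (A, A + B))) p = F4 v p"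
        unfolding p by (simp only: o_apply case_prod_conv F4_pt)
    qed
  qed
  finally show ?thesis .
qed

lemma S6: "comm (\<lambda>v. Sum_any (\<lambda>i. T6f i v)) (opX sc a) v = Sum_any (F6 v)"
proof -
  have "comm (\<lambda>v. Sum_any (\<lambda>i. T6f i v)) (opX sc a) v = Sum_any (\<lambda>i. Sum_any (\<lambda>k. comm (T6f i) (Yk k) v))"
    by (rule commX[OF T6_add T6_fin])
  also have "\<dots> = Sum_any (F6 v)"
  proof (rule Sum_any.cong)
    fix i show "Sum_any (\<lambda>k. comm (T6f i) (Yk k) v) = F6 v i"
    proof (cases i)
      case (Pair m n)
      have c: "(- (1/2) * of_int (m - n) * of_int (- (n + m)) :: complex) = (1/2) * of_int (m - n) * of_int (m + n)"
        by (simp add: field_simps)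
      show ?thesis unfolding Pair cT6 delta2 F6_def Xc_def c by simp
    qed
  qed
  finally show ?thesis .
qed

lemma F46: "F4 v p + F6 v p = H v p"
proof (cases p)
  case (Pair A B)
  have c: "(of_int (A + B) * of_int B + (1/2) * of_int (A - B) * of_int (A + B) :: complex)
     = (1/2) * of_int (A + B) * of_int (A + B)" by (simp add: field_simps)
  show ?thesis
  proof (cases "A \<noteq> 0 \<and> B \<noteq> 0 \<and> A + B \<noteq> 0")
    case True
    show ?thesis unfolding Pair F4_def F6_def H_def case_prod_conv if_P[OF True]
      by (simp only: sc_coll c)
  next
    case False
    show ?thesis unfolding Pair F4_def F6_def H_def case_prod_conv if_not_P[OF False] by simp
  qed
qed

lemma H_swap: "H v (B, A) = - H v (A, B)"
proof -
  have "Xc v B A = - Xc v A B" unfolding Xc_def by (simp add: same[of MC "-B" "-A"] fermionic_def add.commute)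
  then show ?thesis unfolding H_def by (simp add: add.commute mult.commute)
qed

lemma S46: "Sum_any (F4 v) + Sum_any (F6 v) = 0"
proof -
  have f4: "finite {p. F4 v p \<noteq> 0}" unfolding F4_def by (rule Xc_fin[of "\<lambda>A B. of_int (A + B) * of_int B"])
  have f6: "finite {p. F6 v p \<noteq> 0}" unfolding F6_def by (rule Xc_fin[of "\<lambda>A B. (1/2) * of_int (A - B) * of_int (A + B)"])
  have "Sum_any (F4 v) + Sum_any (F6 v) = Sum_any (H v)"
    unfolding Sum_any.distrib[OF f4 f6, symmetric] F46 ..
  moreover have "Sum_any (H v) = - Sum_any (H v)"
  proof -
    have "Sum_any (H v) = Sum_any (\<lambda>p. - H v p)"
    proof (rule Sum_any.reindex_cong[of "\<lambda>(A, B). (B, A)"])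
      show "bij (\<lambda>(A::int, B::int). (B, A))"
        by (rule bij_betw_byWitness[of _ "\<lambda>(A, B). (B, A)"]) auto
      show "H v \<circ> (\<lambda>(A, B). (B, A)) = (\<lambda>p. - H v p)"
      proof (rule ext)
        fix p :: "int \<times> int"
        obtain A B where p: "p = (A, B)" by (cases p)
        show "(H v \<circ> (\<lambda>(A, B). (B, A))) p = - H v p"
          unfolding p o_apply case_prod_conv by (rule H_swap)
      qed
    qed
    then show ?thesis by (simp add: Sum_any_neg)
  qed
  moreover have Z: "\<And>x::'v. x = - x \<Longrightarrow> x = 0"
  proof -
    fix x :: 'v assume "x = - x"
    then have "x + x = 0" by (metis add.right_inverse)
    then have "sc (1/2) (x + x) = 0" by simp
    then show "x = 0" by (simp add: sc_coll)
  qed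
  ultimately show ?thesis using Z by simp
qed

end

context OR begin

lemma dhat_X: "comm (dhat sc a) (opX sc a) v = 0"
proof -
  have "comm (dhat sc a) (opX sc a) v =
      comm (\<lambda>v. Sum_any (\<lambda>i. T1f i v)) (opX sc a) v + comm (\<lambda>v. Sum_any (\<lambda>i. T2f i v)) (opX sc a) v
    + comm (\<lambda>v. Sum_any (\<lambda>i. T3f i v)) (opX sc a) v + comm (\<lambda>v. Sum_any (\<lambda>i. T4f i v)) (opX sc a) v
    + comm (\<lambda>v. Sum_any (\<lambda>i. T5f i v)) (opX sc a) v + comm (\<lambda>v. Sum_any (\<lambda>i. T6f i v)) (opX sc a) v"
    unfolding comm_def dhat_T opX_add by (simp add: algebra_simps)
  also have "\<dots> = Sum_any (g2 v) + Sum_any (F4 v) + - Sum_any (g2 v) + Sum_any (F6 v)"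
    by (simp add: S1 S2 S3 S4 S5 S6)
  also have "\<dots> = Sum_any (F4 v) + Sum_any (F6 v)" by (simp add: algebra_simps)
  also have "\<dots> = 0" by (rule S46)
  finally show ?thesis .
qed

lemma gP: "q \<noteq> MGamma \<Longrightarrow> a q p (a MGamma 0 w) = a MGamma 0 (a q p w) + (if q = MBeta \<and> p = 0 then - w else 0)"
  using rel[of q p MGamma 0 w] by (cases q) (simp_all add: fermionic_def kd_def)

lemma gG: "p \<noteq> 0 \<Longrightarrow> a MGamma p (a MGamma 0 w) = a MGamma 0 (a MGamma p w)"
  by (rule sameB) simp

lemma cP1: "comm (T1f i) (a MGamma 0) v = 0"
  by (cases i) (simp add: comm_def T1f_def gP)
lemma cP2: "comm (T2f i) (a MGamma 0) v = 0"
proof (cases i)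
  case (Pair n m)
  show ?thesis
  proof (cases "n - m = 0")
    case True
    then have "m = n" by simp
    then show ?thesis unfolding Pair by (simp add: comm_def T2f_def gP)
  next
    case False
    then show ?thesis unfolding Pair by (simp add: comm_def T2f_def gP gG)
  qed
qed
lemma cP3: "comm (T3f i) (a MGamma 0) v = 0"
  by (simp add: comm_def T3f_def gP)
lemma cP4: "comm (T4f i) (a MGamma 0) v = 0"
  by (cases i) (simp add: comm_def T4f_def gP)
lemma cP5: "comm (T5f i) (a MGamma 0) v = 0"
  by (simp add: comm_def T5f_def gP)
lemma cP6: "comm (T6f i) (a MGamma 0) v = 0"
  by (cases i) (simp add: comm_def T6f_def gP)

lemma dhat_P: "comm (dhat sc a) (opP a) v = 0"
proof -
  have "comm (dhat sc a) (opP a) v =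
      comm (\<lambda>v. Sum_any (\<lambda>i. T1f i v)) (a MGamma 0) v + comm (\<lambda>v. Sum_any (\<lambda>i. T2f i v)) (a MGamma 0) v
    + comm (\<lambda>v. Sum_any (\<lambda>i. T3f i v)) (a MGamma 0) v + comm (\<lambda>v. Sum_any (\<lambda>i. T4f i v)) (a MGamma 0) v
    + comm (\<lambda>v. Sum_any (\<lambda>i. T5f i v)) (a MGamma 0) v + comm (\<lambda>v. Sum_any (\<lambda>i. T6f i v)) (a MGamma 0) v"
    unfolding comm_def dhat_T opP_def by (simp add: algebra_simps)
  also have "\<dots> = 0"
    by (simp add: comm_sum_left[OF a_add T1_fin] comm_sum_left[OF a_add T2_fin] comm_sum_left[OF a_add T3_fin]
       comm_sum_left[OF a_add T4_fin] comm_sum_left[OF a_add T5_fin] comm_sum_left[OF a_add T6_fin]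
       cP1 cP2 cP3 cP4 cP5 cP6)
  finally show ?thesis .
qed

lemma tld_add: "tld sc a k n (x + y) = tld sc a k n x + tld sc a k n y"
  by (simp add: tld_def)

lemma two_delta: "Sum_any (\<lambda>j. (if j = p then x else 0) + (if j = q then y else (0::'v))) = x + y"
proof -
  have f1: "finite {j. (if j = p then x else 0) \<noteq> 0}" by (rule finite_subset[of _ "{p}"]) auto
  have f2: "finite {j. (if j = q then y else 0) \<noteq> 0}" by (rule finite_subset[of _ "{q}"]) auto
  show ?thesis unfolding Sum_any.distrib[OF f1 f2] by simp
qed

lemma tX: "n \<noteq> 0 \<Longrightarrow> comm (tld sc a k n) (opX sc a) v = 0"
proof -
  assume n: "n \<noteq> 0"
  have X: "opX sc a = (\<lambda>v. Sum_any (\<lambda>k. Yk k v))" by (rule ext) (rule opX_Y)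
  have E: "comm (tld sc a k n) (opX sc a) v = Sum_any (\<lambda>j. comm (tld sc a k n) (Yk j) v)"
    unfolding X by (rule comm_sum_right[OF tld_add Y_fin])
  show ?thesis
  proof (cases "k = MB \<or> k = MEta")
    case True
    then show ?thesis
    proof
      assume k: "k = MB"
      have "comm (tld sc a k n) (Yk j) v = (if j = -n then sc (- of_int n) (a MZeta n v) else 0)
           + (if j = 0 then sc (of_int n) (a MZeta n v) else 0)" for j
        using n unfolding k by (auto simp: comm_def tld_def)
      then show ?thesis unfolding E by (simp add: two_delta)
    next
      assume k: "k = MEta"
      have "comm (tld sc a k n) (Yk j) v = (if j = n then - sc (of_int n) (a MC n v) else 0)
           + (if j = 0 then sc (of_int n) (a MC n v) else 0)" for j
        using n unfolding k by (auto simp: comm_def tld_def)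
      then show ?thesis unfolding E by (simp add: two_delta)
    qed
  next
    case False
    then have "comm (tld sc a k n) (Yk j) v = 0" for j
      using n by (cases k) (auto simp: comm_def tld_def)
    then show ?thesis unfolding E by simp
  qed
qed

lemma tP: "n \<noteq> 0 \<Longrightarrow> comm (tld sc a k n) (opP a) v = 0"
  by (cases k) (simp_all add: comm_def tld_def opP_def gP gG)

end

theorem mainTheorem2:
  fixes sc :: "complex \<Rightarrow> 'v::ab_group_add \<Rightarrow> 'v"
    and a :: "mode \<Rightarrow> int \<Rightarrow> 'v \<Rightarrow> 'v"
  assumes "osc_rep sc a"
  shows "(\<forall>k l m n. m \<noteq> 0 \<longrightarrow> n \<noteq> 0 \<longrightarrow>
            gbr k l (tld sc a k m) (tld sc a l n) = (\<lambda>v. sc (brk k m l n) v))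
       \<and> (\<forall>k n. n \<noteq> 0 \<longrightarrow> comm (tld sc a k n) (opX sc a) = (\<lambda>v. 0)
                          \<and> comm (tld sc a k n) (opP a) = (\<lambda>v. 0))
       \<and> comm (dhat sc a) (opX sc a) = (\<lambda>v. 0)
       \<and> comm (dhat sc a) (opP a) = (\<lambda>v. 0)"
proof -
  interpret OR sc a using assms by (rule OR.intro)
  show ?thesis
    using P1 tX tP dhat_X dhat_P by (auto intro!: ext)
qed


end
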